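(* Let $X$ and $\Lambda$ be nonempty sets, $x^0\in X$, $f: X\to\mathbb{R}$, and $(f_\lambda)_{\lambda\in\Lambda}$ a family of real-valued functions on $X$ such that the feasible set $X_0:=\{x\in X:\ \sup_{\lambda\in\Lambda}f_\lambda(x)\le0\}$ is nonempty and $(f_\lambda(x))_{\lambda\in\Lambda}\in\ell^\infty(\Lambda)$ for every $x\in X$. Assume the family $(f_\lambda)_{\lambda\in\Lambda}\cup(f-f(x^0))$ is infsup-convex on $X$ and the Slater condition holds: there exists $x^1\in X$ with $\sup_{\lambda\in\Lambda}f_\lambda(x^1)<0$. Then $x^0$ is an optimal solution of $\inf_{x\in X_0}f(x)$ (i.e. $x^0\in X_0$ and $f(x^0)=\inf_{x\in X_0}f(x)$) if and only if $x^0\in X_0$ and there exists $\Phi_0\in\ell^\infty(\Lambda)^*_+$ such that the function $x\mapsto f(x)+\Phi_0((f_\lambda(x))_{\lambda\in\Lambda})$ attains its infimum on $X$ at $x^0$ and $\Phi_0((f_\lambda(x^0))_{\lambda\in\Lambda})=0$.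
   Context: $\ell^\infty(\Lambda)$ is the Banach space of bounded real functions on $\Lambda$ (sup-norm), $\ell^\infty(\Lambda)^*_+$ the cone of positive continuous linear functionals on it. The family $(f_\lambda)_{\lambda\in\Lambda}\cup(f-f(x^0))$ is the family indexed by $\Lambda\cup\{\mu\}$ ($\mu\notin\Lambda$) whose $\mu$-th member is $f-f(x^0)$. With $\Delta_m:=\{\mathbf t\in\mathbb{R}^m: t_j\ge0,\sum t_j=1\}$, a family $(g_i)_{i\in I}$ of real functions on $X$ is infsup-convex on $X$ if for all $m\ge1$, $\mathbf{t}\in\Delta_m$, $x_1,\dots,x_m\in X$: $\inf_{x\in X}\sup_{i\in I}g_i(x)\le\sup_{i\in I}\sum_{j=1}^m t_j g_i(x_j)$. *)

theory Defs
  imports "HOL-Analysis.Analysis"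
begin

text \<open>The index set \<Lambda> is represented by the (nonempty) type 'l.
  l-infinity(\<Lambda>): bounded real functions on \<Lambda>, with the sup-norm.\<close>

definition linfty :: "('l \<Rightarrow> real) set" where
  "linfty = {u. bounded (range u)}"

definition supnorm :: "('l \<Rightarrow> real) \<Rightarrow> real" where
  "supnorm u = (SUP l. \<bar>u l\<bar>)"

text \<open>Positive continuous linear functionals on l-infinity (values of \<Phi> outside
  l-infinity are irrelevant).\<close>

definition pos_cont_lin_functional :: "(('l \<Rightarrow> real) \<Rightarrow> real) \<Rightarrow> bool" where
  "pos_cont_lin_functional \<Phi> \<longleftrightarrow>
     (\<forall>u\<in>linfty. \<forall>v\<in>linfty. \<Phi> (\<lambda>l. u l + v l) = \<Phi> u + \<Phi> v) \<and>
     (\<forall>c::real. \<forall>u\<in>linfty. \<Phi> (\<lambda>l. c * u l) = c * \<Phi> u) \<and>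
     (\<exists>C. \<forall>u\<in>linfty. \<bar>\<Phi> u\<bar> \<le> C * supnorm u) \<and>
     (\<forall>u\<in>linfty. (\<forall>l. 0 \<le> u l) \<longrightarrow> 0 \<le> \<Phi> u)"

definition infsup_convex :: "('i \<Rightarrow> 'a \<Rightarrow> real) \<Rightarrow> 'a set \<Rightarrow> bool" where
  "infsup_convex g X \<longleftrightarrow>
     (\<forall>m::nat. \<forall>t::nat \<Rightarrow> real. \<forall>xs::nat \<Rightarrow> 'a.
        1 \<le> m \<longrightarrow> (\<forall>j<m. 0 \<le> t j) \<longrightarrow> (\<Sum>j<m. t j) = 1 \<longrightarrow> (\<forall>j<m. xs j \<in> X) \<longrightarrow>
        (INF x\<in>X. SUP i. ereal (g i x)) \<le> (SUP i. ereal (\<Sum>j<m. t j * g i (xs j))))"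

end

theory Submission
  imports Defs
begin

definition vsp :: "('i \<Rightarrow> real) set \<Rightarrow> bool" where
  "vsp V \<longleftrightarrow> (\<lambda>i. 0) \<in> V \<and> (\<forall>u\<in>V. \<forall>v\<in>V. (\<lambda>i. u i + v i) \<in> V) \<and> (\<forall>c. \<forall>u\<in>V. (\<lambda>i. c * u i) \<in> V)"

definition sublin :: "('i \<Rightarrow> real) set \<Rightarrow> (('i \<Rightarrow> real) \<Rightarrow> real) \<Rightarrow> bool" where
  "sublin V r \<longleftrightarrow> (\<forall>u\<in>V. \<forall>v\<in>V. r (\<lambda>i. u i + v i) \<le> r u + r v) \<and>
     (\<forall>c\<ge>0. \<forall>u\<in>V. r (\<lambda>i. c * u i) = c * r u)"

lemma vsp_add: "vsp V \<Longrightarrow> u \<in> V \<Longrightarrow> v \<in> V \<Longrightarrow> (\<lambda>i. u i + v i) \<in> V"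
  by (simp add: vsp_def)
lemma vsp_scale: "vsp V \<Longrightarrow> u \<in> V \<Longrightarrow> (\<lambda>i. c * u i) \<in> V"
  by (simp add: vsp_def)
lemma vsp_neg: "vsp V \<Longrightarrow> u \<in> V \<Longrightarrow> (\<lambda>i. - u i) \<in> V"
  using vsp_scale[of V u "-1"] by simp
lemma vsp_zero: "vsp V \<Longrightarrow> (\<lambda>i. 0) \<in> V"
  by (simp add: vsp_def)
lemma vsp_comb: "vsp V \<Longrightarrow> u \<in> V \<Longrightarrow> v \<in> V \<Longrightarrow> (\<lambda>i. u i + t * v i) \<in> V"
  using vsp_add[of V u "\<lambda>i. t * v i"] vsp_scale[of V v t] by simp

lemma sl_add: "sublin V r \<Longrightarrow> u \<in> V \<Longrightarrow> v \<in> V \<Longrightarrow> r (\<lambda>i. u i + v i) \<le> r u + r v"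
  by (simp add: sublin_def)
lemma sl_hom: "sublin V r \<Longrightarrow> c \<ge> 0 \<Longrightarrow> u \<in> V \<Longrightarrow> r (\<lambda>i. c * u i) = c * r u"
  by (simp add: sublin_def)
lemma sl_zero: "vsp V \<Longrightarrow> sublin V r \<Longrightarrow> r (\<lambda>i. 0) = 0"
  using sl_hom[of V r 0 "\<lambda>i. 0"] vsp_zero[of V] by simp
lemma sl_lower: assumes "vsp V" "sublin V r" "v \<in> V" shows "- r (\<lambda>i. - v i) \<le> r v"
proof -
  have "r (\<lambda>i. v i + - v i) \<le> r v + r (\<lambda>i. - v i)"
    using sl_add[OF assms(2) assms(3) vsp_neg[OF assms(1,3)]] .
  then show ?thesis using sl_zero[OF assms(1,2)] by simp
qed

lemma sl_cong: assumes "vsp V" "sublin V r" "\<forall>v\<in>V. r' v = r v" shows "sublin V r'"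
  using assms unfolding sublin_def by (simp add: vsp_add vsp_scale)

lemma min_lin:
  assumes V: "vsp V" and r: "sublin V r"
    and mini: "\<And>r'. sublin V r' \<Longrightarrow> (\<forall>v\<in>V. r' v \<le> r v) \<Longrightarrow> (\<forall>v. v \<notin> V \<longrightarrow> r' v = 0) \<Longrightarrow> (\<forall>v\<in>V. r' v = r v)"
    and x: "x \<in> V" and y: "y \<in> V"
  shows "r x + r y \<le> r (\<lambda>i. x i + y i)"
proof -
  define ry where "ry x = (if x \<in> V then (INF t\<in>{0::real..}. r (\<lambda>i. x i + t * y i) - t * r y) else 0)" for x
  have lowb: "- r (\<lambda>i. - x i) \<le> r (\<lambda>i. x i + t * y i) - t * r y" if "x \<in> V" "t \<ge> 0" for x t
  proof -
    have "r (\<lambda>i. (x i + t * y i) + - x i) \<le> r (\<lambda>i. x i + t * y i) + r (\<lambda>i. - x i)"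
      by (rule sl_add[OF r vsp_comb[OF V that(1) y] vsp_neg[OF V that(1)]])
    moreover have "r (\<lambda>i. (x i + t * y i) + - x i) = t * r y"
      using sl_hom[OF r that(2) y] by simp
    ultimately show ?thesis by simp
  qed
  have bdd: "bdd_below ((\<lambda>t. r (\<lambda>i. x i + t * y i) - t * r y) ` {0..})" if "x \<in> V" for x
    using lowb[OF that] by (intro bdd_belowI[where m="- r (\<lambda>i. - x i)"]) auto
  have ry_le: "ry x \<le> r (\<lambda>i. x i + t * y i) - t * r y" if "x \<in> V" "t \<ge> 0" for x t
    unfolding ry_def using that by (simp add: cINF_lower[OF bdd[OF that(1)]])
  have ry_ge: "m \<le> ry x" if "x \<in> V" "\<And>t. t \<ge> 0 \<Longrightarrow> m \<le> r (\<lambda>i. x i + t * y i) - t * r y" for x m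
    unfolding ry_def using that by (auto intro!: cINF_greatest)
  have ry_r: "ry x \<le> r x" if "x \<in> V" for x
    using ry_le[OF that, of 0] by simp
  have hom_le: "ry (\<lambda>i. c * u i) \<le> c * ry u" if "c > 0" "u \<in> V" for c u
  proof -
    have "ry (\<lambda>i. c * u i) / c \<le> ry u"
    proof (rule ry_ge[OF that(2)])
      fix s :: real assume s: "s \<ge> 0"
      have "ry (\<lambda>i. c * u i) \<le> r (\<lambda>i. c * u i + (c * s) * y i) - (c * s) * r y"
        using ry_le[OF vsp_scale[OF V that(2)], of "c * s"] that s by simp
      also have "r (\<lambda>i. c * u i + (c * s) * y i) = c * r (\<lambda>i. u i + s * y i)"
        using sl_hom[OF r _ vsp_comb[OF V that(2) y], of c s] that by (simp add: algebra_simps)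
      finally show "ry (\<lambda>i. c * u i) / c \<le> r (\<lambda>i. u i + s * y i) - s * r y"
        using that by (simp add: field_simps)
    qed
    then show ?thesis using that by (simp add: field_simps)
  qed
  have ry_sl: "sublin V ry"
    unfolding sublin_def
  proof (intro conjI ballI allI impI)
    fix u v assume u: "u \<in> V" and v: "v \<in> V"
    have "ry (\<lambda>i. u i + v i) - (r (\<lambda>i. v i + s' * y i) - s' * r y) \<le> ry u" if s': "s' \<ge> 0" for s'
    proof (rule ry_ge[OF u])
      fix s :: real assume s: "s \<ge> 0"
      have "ry (\<lambda>i. u i + v i) \<le> r (\<lambda>i. (u i + v i) + (s + s') * y i) - (s + s') * r y"
        using ry_le[OF vsp_add[OF V u v], of "s + s'"] s s' by simp
      also have "r (\<lambda>i. (u i + v i) + (s + s') * y i) \<le> r (\<lambda>i. u i + s * y i) + r (\<lambda>i. v i + s' * y i)"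
        using sl_add[OF r vsp_comb[OF V u y, of s] vsp_comb[OF V v y, of s']] by (simp add: algebra_simps)
      finally show "ry (\<lambda>i. u i + v i) - (r (\<lambda>i. v i + s' * y i) - s' * r y) \<le> r (\<lambda>i. u i + s * y i) - s * r y"
        by (simp add: algebra_simps)
    qed
    then have "ry (\<lambda>i. u i + v i) - ry u \<le> ry v"
      by (intro ry_ge[OF v]) (simp add: algebra_simps)
    then show "ry (\<lambda>i. u i + v i) \<le> ry u + ry v" by simp
  next
    fix c :: real and u assume c: "c \<ge> 0" and u: "u \<in> V"
    show "ry (\<lambda>i. c * u i) = c * ry u"
    proof (cases "c = 0")
      case True
      have "ry (\<lambda>i. 0) = (INF t\<in>{0::real..}. 0)"
        unfolding ry_def using vsp_zero[OF V] sl_hom[OF r _ y]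
        by (auto intro!: INF_cong)
      then show ?thesis using True by simp
    next
      case False
      then have cp: "c > 0" using c by simp
      have "ry (\<lambda>i. (1/c) * (c * u i)) \<le> (1/c) * ry (\<lambda>i. c * u i)"
        by (rule hom_le) (use cp vsp_scale[OF V u] in auto)
      then have "ry u \<le> (1/c) * ry (\<lambda>i. c * u i)" using cp by simp
      then have "c * ry u \<le> ry (\<lambda>i. c * u i)" using cp by (simp add: field_simps)
      with hom_le[OF cp u] show ?thesis by simp
    qed
  qed
  have "\<forall>v\<in>V. ry v = r v"
    by (rule mini[OF ry_sl]) (use ry_r in \<open>auto simp: ry_def\<close>)
  then have "r x = ry x" using x by simp
  also have "\<dots> \<le> r (\<lambda>i. x i + 1 * y i) - 1 * r y" by (rule ry_le[OF x]) simp
  finally show ?thesis by simp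
qed

lemma hahn_banach:
  assumes V: "vsp V" and q: "sublin V q"
  shows "\<exists>\<psi>. (\<forall>u\<in>V. \<forall>v\<in>V. \<psi> (\<lambda>i. u i + v i) = \<psi> u + \<psi> v) \<and>
             (\<forall>c. \<forall>u\<in>V. \<psi> (\<lambda>i. c * u i) = c * \<psi> u) \<and> (\<forall>v\<in>V. \<psi> v \<le> q v)"
proof -
  define A where "A = {r. sublin V r \<and> (\<forall>v\<in>V. r v \<le> q v) \<and> (\<forall>v. v \<notin> V \<longrightarrow> r v = 0)}"
  define P where "P a b = (\<forall>v\<in>V. b v \<le> a v)" for a b :: "('a \<Rightarrow> real) \<Rightarrow> real"
  have Alow: "- q (\<lambda>i. - v i) \<le> r v" if "r \<in> A" "v \<in> V" for r v
  proof -
    have "r (\<lambda>i. - v i) \<le> q (\<lambda>i. - v i)" using that vsp_neg[OF V that(2)] by (auto simp: A_def)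
    moreover have "- r (\<lambda>i. - v i) \<le> r v" using sl_lower[OF V _ that(2)] that(1) by (auto simp: A_def)
    ultimately show ?thesis by simp
  qed
  have antis: "x = y" if "x \<in> A" "y \<in> A" "P x y" "P y x" for x y
  proof
    fix v show "x v = y v"
      using that by (cases "v \<in> V") (auto simp: A_def P_def intro: order_antisym)
  qed
  have po: "partial_order_on A (relation_of P A)"
    unfolding partial_order_on_def preorder_on_def refl_on_def trans_on_def antisym_on_def
    using antis by (auto simp: relation_of_def P_def) (meson order_trans)
  have ch: "\<exists>u\<in>A. \<forall>a\<in>C. P a u" if C: "C \<in> Chains (relation_of P A)" for C
  proof (cases "C = {}")
    case True
    define q0 where "q0 v = (if v \<in> V then q v else 0)" for v
    have "q0 \<in> A" unfolding A_def using sl_cong[OF V q, of q0] by (auto simp: q0_def)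
    then show ?thesis using True by auto
  next
    case False
    have CA: "C \<subseteq> A" using C unfolding Chains_def relation_of_def by auto
    have chn: "P a b \<or> P b a" if "a \<in> C" "b \<in> C" for a b
      using C that unfolding Chains_def relation_of_def by auto
    define u where "u v = (if v \<in> V then (INF r\<in>C. r v) else 0)" for v
    have bdd: "bdd_below ((\<lambda>r. r v) ` C)" if "v \<in> V" for v
      using Alow[OF _ that] CA by (intro bdd_belowI[where m="- q (\<lambda>i. - v i)"]) auto
    have u_le: "u v \<le> r v" if "v \<in> V" "r \<in> C" for v r
      unfolding u_def using that cINF_lower[OF bdd] by simp
    have u_ge: "m \<le> u v" if "v \<in> V" "\<And>r. r \<in> C \<Longrightarrow> m \<le> r v" for v m
      unfolding u_def using that False by (auto intro!: cINF_greatest)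
    have Csl: "sublin V r" if "r \<in> C" for r using that CA by (auto simp: A_def)
    have usl: "sublin V u" unfolding sublin_def
    proof (intro conjI ballI allI impI)
      fix a b assume a: "a \<in> V" and b: "b \<in> V"
      have "u (\<lambda>i. a i + b i) \<le> r1 a + r2 b" if r1: "r1 \<in> C" and r2: "r2 \<in> C" for r1 r2
      proof (cases "P r1 r2")
        case True
        have "u (\<lambda>i. a i + b i) \<le> r2 (\<lambda>i. a i + b i)" by (rule u_le[OF vsp_add[OF V a b] r2])
        also have "\<dots> \<le> r2 a + r2 b" by (rule sl_add[OF Csl[OF r2] a b])
        also have "\<dots> \<le> r1 a + r2 b" using True a by (simp add: P_def)
        finally show ?thesis .
      next
        case False
        then have "P r2 r1" using chn[OF r1 r2] by simp
        have "u (\<lambda>i. a i + b i) \<le> r1 (\<lambda>i. a i + b i)" by (rule u_le[OF vsp_add[OF V a b] r1])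
        also have "\<dots> \<le> r1 a + r1 b" by (rule sl_add[OF Csl[OF r1] a b])
        also have "\<dots> \<le> r1 a + r2 b" using \<open>P r2 r1\<close> b by (simp add: P_def)
        finally show ?thesis .
      qed
      then have "u (\<lambda>i. a i + b i) - r2 b \<le> u a" if "r2 \<in> C" for r2
        using that by (intro u_ge[OF a]) (simp add: algebra_simps)
      then have "u (\<lambda>i. a i + b i) - u a \<le> u b"
        by (intro u_ge[OF b]) (simp add: algebra_simps)
      then show "u (\<lambda>i. a i + b i) \<le> u a + u b" by simp
    next
      fix c :: real and v assume c: "c \<ge> 0" and v: "v \<in> V"
      have cv: "(\<lambda>i. c * v i) \<in> V" by (rule vsp_scale[OF V v])
      show "u (\<lambda>i. c * v i) = c * u v"
      proof (cases "c = 0")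
        case True
        have "u (\<lambda>i. 0) = (INF r\<in>C. 0)"
          unfolding u_def using vsp_zero[OF V] sl_zero[OF V Csl]
          by (auto intro!: INF_cong)
        then show ?thesis using True False by simp
      next
        case c0: False
        then have cp: "c > 0" using c by simp
        have "u (\<lambda>i. c * v i) / c \<le> u v"
        proof (rule u_ge[OF v])
          fix r assume r: "r \<in> C"
          have "u (\<lambda>i. c * v i) \<le> r (\<lambda>i. c * v i)" by (rule u_le[OF cv r])
          also have "\<dots> = c * r v" using sl_hom[OF Csl[OF r] c v] .
          finally show "u (\<lambda>i. c * v i) / c \<le> r v" using cp by (simp add: field_simps)
        qed
        moreover have "c * u v \<le> u (\<lambda>i. c * v i)"
        proof (rule u_ge[OF cv])
          fix r assume r: "r \<in> C"
          have "c * u v \<le> c * r v" using u_le[OF v r] cp by simp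
          also have "\<dots> = r (\<lambda>i. c * v i)" using sl_hom[OF Csl[OF r] c v] by simp
          finally show "c * u v \<le> r (\<lambda>i. c * v i)" .
        qed
        ultimately show ?thesis using cp by (simp add: field_simps)
      qed
    qed
    obtain r0 where r0: "r0 \<in> C" using False by auto
    have "u \<in> A" unfolding A_def
    proof (intro CollectI conjI usl ballI allI impI)
      fix v assume "v \<in> V"
      then show "u v \<le> q v" using u_le[OF _ r0] CA r0 by (force simp: A_def)
    qed (simp add: u_def)
    moreover have "\<forall>a\<in>C. P a u" using u_le by (auto simp: P_def)
    ultimately show ?thesis by blast
  qed
  obtain m where mA: "m \<in> A" and mmax: "\<forall>a\<in>A. P m a \<longrightarrow> a = m"
    using predicate_Zorn[OF po ch] by blast
  have msl: "sublin V m" using mA by (simp add: A_def)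
  have mini: "\<forall>v\<in>V. r' v = m v" if "sublin V r'" "\<forall>v\<in>V. r' v \<le> m v" "\<forall>v. v \<notin> V \<longrightarrow> r' v = 0" for r'
  proof -
    have mq: "\<forall>v\<in>V. m v \<le> q v" using mA by (simp add: A_def)
    have "\<forall>v\<in>V. r' v \<le> q v"
    proof
      fix v assume "v \<in> V"
      then have "r' v \<le> m v" "m v \<le> q v" using that(2) mq by auto
      then show "r' v \<le> q v" by linarith
    qed
    then have "r' \<in> A" using that(1,3) by (simp add: A_def)
    moreover have "P m r'" using that by (simp add: P_def)
    ultimately have "r' = m" using mmax by blast
    then show ?thesis by simp
  qed
  have add: "m (\<lambda>i. u i + v i) = m u + m v" if "u \<in> V" "v \<in> V" for u v
  proof -
    have "m u + m v \<le> m (\<lambda>i. u i + v i)" by (rule min_lin[OF V msl mini that])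
    moreover have "m (\<lambda>i. u i + v i) \<le> m u + m v" by (rule sl_add[OF msl that])
    ultimately show ?thesis by linarith
  qed
  have neg: "m (\<lambda>i. - u i) = - m u" if "u \<in> V" for u
    using add[OF that vsp_neg[OF V that]] sl_zero[OF V msl] by simp
  have hom: "m (\<lambda>i. c * u i) = c * m u" if "u \<in> V" for c u
  proof (cases "c \<ge> 0")
    case True then show ?thesis using sl_hom[OF msl True that] by simp
  next
    case False
    have "m (\<lambda>i. c * u i) = m (\<lambda>i. (-c) * (- u i))" by simp
    also have "\<dots> = (-c) * m (\<lambda>i. - u i)" using sl_hom[OF msl _ vsp_neg[OF V that], of "-c"] False by simp
    finally show ?thesis using neg[OF that] by simp
  qed
  have "\<forall>v\<in>V. m v \<le> q v" using mA by (simp add: A_def)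
  with add hom show ?thesis by blast
qed

lemma sum_concat: "(\<Sum>j<m1+(m2::nat). T j) = (\<Sum>j<m1. T j) + (\<Sum>j<m2. T (j + m1)::real)"
  by (induct m2) (simp_all add: add.commute add.left_commute)

lemma linfty_iff: "u \<in> linfty \<longleftrightarrow> (\<exists>B. \<forall>i. \<bar>u i\<bar> \<le> B)"
  unfolding linfty_def bounded_iff by auto

lemma vsp_linfty: "vsp linfty"
  unfolding vsp_def
proof (intro conjI ballI allI)
  show "(\<lambda>i. 0) \<in> linfty" by (auto simp: linfty_iff)
next
  fix u v :: "'a \<Rightarrow> real" assume "u \<in> linfty" "v \<in> linfty"
  then obtain B1 B2 where "\<forall>i. \<bar>u i\<bar> \<le> B1" "\<forall>i. \<bar>v i\<bar> \<le> B2" by (auto simp: linfty_iff)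
  then have "\<bar>u i + v i\<bar> \<le> B1 + B2" for i using abs_triangle_ineq[of "u i" "v i"]
    by (smt (verit))
  then show "(\<lambda>i. u i + v i) \<in> linfty" by (auto simp: linfty_iff)
next
  fix c :: real and u :: "'a \<Rightarrow> real" assume "u \<in> linfty"
  then obtain B where B: "\<forall>i. \<bar>u i\<bar> \<le> B" by (auto simp: linfty_iff)
  have "\<bar>c * u i\<bar> \<le> \<bar>c\<bar> * B" for i using B by (simp add: abs_mult mult_left_mono)
  then show "(\<lambda>i. c * u i) \<in> linfty" by (auto simp: linfty_iff)
qed

lemma linfty_const: "(\<lambda>i. c) \<in> linfty"
  by (auto simp: linfty_iff intro!: exI[of _ "\<bar>c\<bar>"])

lemma linfty_bdd: "u \<in> linfty \<Longrightarrow> bdd_above (range u)"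
  by (auto simp: linfty_iff bdd_above_def) (metis abs_le_D1)

lemma linfty_bdd_abs: "u \<in> linfty \<Longrightarrow> bdd_above (range (\<lambda>i. \<bar>u i\<bar>))"
  by (auto simp: linfty_iff bdd_above_def)

definition psup :: "('i \<Rightarrow> real) \<Rightarrow> real" where "psup v = (SUP i. v i)"

lemma psup_ub: "v \<in> linfty \<Longrightarrow> v i \<le> psup v"
  unfolding psup_def by (rule cSUP_upper[OF _ linfty_bdd]) auto

lemma psup_least: "(\<And>i. v i \<le> b) \<Longrightarrow> psup v \<le> b"
  unfolding psup_def by (rule cSUP_least) auto

lemma psup_const: "psup (\<lambda>i. c) = c"
  unfolding psup_def by simp

lemma sublin_psup: "sublin linfty psup"
  unfolding sublin_def
proof (intro conjI ballI allI impI)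
  fix u v :: "'a \<Rightarrow> real" assume u: "u \<in> linfty" and v: "v \<in> linfty"
  show "psup (\<lambda>i. u i + v i) \<le> psup u + psup v"
    by (rule psup_least) (use psup_ub[OF u] psup_ub[OF v] in \<open>simp add: add_mono\<close>)
next
  fix c :: real and u :: "'a \<Rightarrow> real" assume c: "c \<ge> 0" and u: "u \<in> linfty"
  show "psup (\<lambda>i. c * u i) = c * psup u"
  proof (cases "c = 0")
    case True then show ?thesis by (simp add: psup_const)
  next
    case False
    then have cp: "c > 0" using c by simp
    have cu: "(\<lambda>i. c * u i) \<in> linfty" by (rule vsp_scale[OF vsp_linfty u])
    have "psup (\<lambda>i. c * u i) \<le> c * psup u"
      by (rule psup_least) (use psup_ub[OF u] cp in simp)
    moreover have "psup u \<le> psup (\<lambda>i. c * u i) / c"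
      by (rule psup_least) (use psup_ub[OF cu] cp in \<open>simp add: field_simps\<close>)
    ultimately show ?thesis using cp by (simp add: field_simps)
  qed
qed

lemma lin_mono:
  assumes add: "\<forall>u\<in>linfty. \<forall>v\<in>linfty. \<Phi> (\<lambda>l. u l + v l) = \<Phi> u + \<Phi> v"
    and hom: "\<forall>c::real. \<forall>u\<in>linfty. \<Phi> (\<lambda>l. c * u l) = c * \<Phi> u"
    and pos: "\<forall>u\<in>linfty. (\<forall>l. 0 \<le> u l) \<longrightarrow> 0 \<le> \<Phi> u"
    and u: "u \<in> linfty" and v: "v \<in> linfty" and le: "\<And>l. u l \<le> v l"
  shows "\<Phi> u \<le> \<Phi> v"
proof -
  have nu: "(\<lambda>l. (-1) * u l) \<in> linfty" by (rule vsp_scale[OF vsp_linfty u])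
  have w: "(\<lambda>l. v l + (-1) * u l) \<in> linfty" by (rule vsp_add[OF vsp_linfty v nu])
  have "\<forall>l. 0 \<le> v l + (-1) * u l" using le by (simp add: algebra_simps)
  then have "0 \<le> \<Phi> (\<lambda>l. v l + (-1) * u l)" using bspec[OF pos w] by (rule mp[rotated])
  moreover have "\<Phi> (\<lambda>l. v l + (-1) * u l) = \<Phi> v + \<Phi> (\<lambda>l. (-1) * u l)"
    by (rule add[rule_format, OF v nu])
  moreover have "\<Phi> (\<lambda>l. (-1) * u l) = (-1) * \<Phi> u" by (rule hom[rule_format, OF u])
  ultimately show ?thesis by linarith
qed

lemma forward:
  fixes X :: "'a set" and fam :: "'l \<Rightarrow> 'a \<Rightarrow> real" and f :: "'a \<Rightarrow> real" and x0 :: 'a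
  assumes x0_in: "x0 \<in> X" and x0f: "(SUP l. fam l x0) \<le> 0"
    and bdd: "\<forall>x\<in>X. (\<lambda>l. fam l x) \<in> linfty"
    and isc: "infsup_convex (\<lambda>i x. case i of None \<Rightarrow> f x - f x0 | Some l \<Rightarrow> fam l x) X"
    and slater: "\<exists>x1\<in>X. (SUP l. fam l x1) < 0"
    and opt: "\<And>x. x \<in> X \<Longrightarrow> (SUP l. fam l x) \<le> 0 \<Longrightarrow> f x0 \<le> f x"
  shows "\<exists>\<Phi>0. pos_cont_lin_functional \<Phi>0 \<and> (\<forall>x\<in>X. 0 \<le> f x - f x0 + \<Phi>0 (\<lambda>l. fam l x)) \<and> \<Phi>0 (\<lambda>l. fam l x0) = 0"
proof -
  define G where "G x = (\<lambda>i. case i of None \<Rightarrow> f x - f x0 | Some l \<Rightarrow> fam l x)" for x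
  have bddx: "(\<lambda>l. fam l x) \<in> linfty" if "x \<in> X" for x using bdd that by blast
  have isc': "(INF x\<in>X. SUP i. ereal (G x i)) \<le> (SUP i. ereal (\<Sum>j<m. t j * G (xs j) i))"
    if "1 \<le> (m::nat)" "\<forall>j<m. 0 \<le> t j" "(\<Sum>j<m. t j) = 1" "\<forall>j<m. xs j \<in> X" for m t xs
  proof -
    have "\<forall>(m::nat) t xs. 1 \<le> m \<longrightarrow> (\<forall>j<m. 0 \<le> t j) \<longrightarrow> (\<Sum>j<m. t j) = 1 \<longrightarrow> (\<forall>j<m. xs j \<in> X) \<longrightarrow>
        (INF x\<in>X. SUP i. ereal (G x i)) \<le> (SUP i. ereal (\<Sum>j<m. t j * G (xs j) i))"
      using isc unfolding infsup_convex_def G_def .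
    then have h: "1 \<le> m \<longrightarrow> (\<forall>j<m. 0 \<le> t j) \<longrightarrow> (\<Sum>j<m. t j) = 1 \<longrightarrow> (\<forall>j<m. xs j \<in> X) \<longrightarrow>
        (INF x\<in>X. SUP i. ereal (G x i)) \<le> (SUP i. ereal (\<Sum>j<m. t j * G (xs j) i))"
      by (rule allE) (erule allE, erule allE, assumption)
    show ?thesis by (rule mp[OF mp[OF mp[OF mp[OF h that(1)] that(2)] that(3)] that(4)])
  qed
  have Glin: "G x \<in> linfty" if x: "x \<in> X" for x
  proof -
    obtain B where B: "\<forall>l. \<bar>fam l x\<bar> \<le> B" using bddx[OF x] by (auto simp: linfty_iff)
    have "\<bar>G x i\<bar> \<le> max B \<bar>f x - f x0\<bar>" for i
      using B by (cases i) (auto simp: G_def le_max_iff_disj)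
    then show ?thesis by (auto simp: linfty_iff)
  qed
  have inf0: "0 \<le> (INF x\<in>X. SUP i. ereal (G x i))"
  proof (rule INF_greatest)
    fix x assume x: "x \<in> X"
    show "0 \<le> (SUP i. ereal (G x i))"
    proof (cases "(SUP l. fam l x) \<le> 0")
      case True
      then have "0 \<le> G x None" using opt[OF x] by (simp add: G_def)
      then show ?thesis by (intro SUP_upper2[of None]) auto
    next
      case False
      then have "0 < (SUP l. fam l x)" by simp
      then obtain l where "0 < fam l x"
        using less_cSUP_iff[OF _ linfty_bdd[OF bddx[OF x]]] by auto
      then have "0 \<le> G x (Some l)" by (simp add: G_def)
      then show ?thesis by (intro SUP_upper2[of "Some l"]) auto
    qed
  qed
  define K where "K = {k. \<exists>m t xs. (\<forall>j<m. 0 \<le> t j) \<and> (\<forall>j<(m::nat). xs j \<in> X) \<and>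
      k = (\<lambda>i. \<Sum>j<m. t j * G (xs j) i)}"
  have K0: "(\<lambda>i. 0) \<in> K" unfolding K_def by (rule CollectI, rule exI[of _ 0]) simp
  have KG: "G x \<in> K" if "x \<in> X" for x
    unfolding K_def using that
    by (intro CollectI exI[of _ 1] exI[of _ "\<lambda>_. 1"] exI[of _ "\<lambda>_. x"]) auto
  have Kadd: "(\<lambda>i. k1 i + k2 i) \<in> K" if hk1: "k1 \<in> K" and hk2: "k2 \<in> K" for k1 k2
  proof -
    obtain m1 t1 xs1 where 1: "\<forall>j<(m1::nat). 0 \<le> t1 j" "\<forall>j<m1. xs1 j \<in> X" "k1 = (\<lambda>i. \<Sum>j<m1. t1 j * G (xs1 j) i)"
      using hk1 unfolding K_def mem_Collect_eq by iprover
    obtain m2 t2 xs2 where 2: "\<forall>j<(m2::nat). 0 \<le> t2 j" "\<forall>j<m2. xs2 j \<in> X" "k2 = (\<lambda>i. \<Sum>j<m2. t2 j * G (xs2 j) i)"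
      using hk2 unfolding K_def mem_Collect_eq by iprover
    define t where "t j = (if j < m1 then t1 j else t2 (j - m1))" for j
    define xs where "xs j = (if j < m1 then xs1 j else xs2 (j - m1))" for j
    have "(\<lambda>i. k1 i + k2 i) = (\<lambda>i. \<Sum>j<m1+m2. t j * G (xs j) i)"
      unfolding sum_concat 1(3) 2(3) t_def xs_def by simp
    moreover have "\<forall>j<m1+m2. 0 \<le> t j" "\<forall>j<m1+m2. xs j \<in> X"
      using 1 2 by (auto simp: t_def xs_def)
    ultimately show ?thesis unfolding K_def
      by (intro CollectI exI[of _ "m1+m2"] exI[of _ t] exI[of _ xs]) simp
  qed
  have Kscale: "(\<lambda>i. c * k i) \<in> K" if hk: "k \<in> K" and hc: "c \<ge> 0" for k c
  proof -
    obtain m t xs where 1: "\<forall>j<(m::nat). 0 \<le> t j" "\<forall>j<m. xs j \<in> X" "k = (\<lambda>i. \<Sum>j<m. t j * G (xs j) i)"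
      using hk unfolding K_def mem_Collect_eq by iprover
    have "(\<lambda>i. c * k i) = (\<lambda>i. \<Sum>j<m. (c * t j) * G (xs j) i)"
      unfolding 1(3) by (simp add: sum_distrib_left mult.assoc)
    moreover have "\<forall>j<m. 0 \<le> c * t j" using 1 hc by simp
    ultimately show ?thesis using 1(2) unfolding K_def
      by (intro CollectI exI[of _ m] exI[of _ "\<lambda>j. c * t j"] exI[of _ xs]) simp
  qed
  have Klin': "(\<lambda>i. \<Sum>j<m. t j * G (xs j) i) \<in> linfty" if "\<forall>j<(m::nat). xs j \<in> X" for m t xs
    using that
  proof (induction m)
    case 0 then show ?case using linfty_const[of 0] by simp
  next
    case (Suc m)
    have "(\<lambda>i. \<Sum>j<Suc m. t j * G (xs j) i) = (\<lambda>i. (\<Sum>j<m. t j * G (xs j) i) + t m * G (xs m) i)" by simp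
    moreover have "(\<lambda>i. (\<Sum>j<m. t j * G (xs j) i) + t m * G (xs m) i) \<in> linfty"
      using Suc by (intro vsp_comb[OF vsp_linfty] Glin) auto
    ultimately show ?case by simp
  qed
  have Klin: "k \<in> linfty" if "k \<in> K" for k using that Klin' unfolding K_def by auto
  have Kpos: "0 \<le> psup k" if hk: "k \<in> K" for k
  proof -
    obtain m t xs where 1: "\<forall>j<(m::nat). 0 \<le> t j" "\<forall>j<m. xs j \<in> X" "k = (\<lambda>i. \<Sum>j<m. t j * G (xs j) i)"
      using hk unfolding K_def mem_Collect_eq by iprover
    define T where "T = (\<Sum>j<m. t j)"
    have T0: "T \<ge> 0" unfolding T_def using 1(1) by (intro sum_nonneg) auto
    show ?thesis
    proof (cases "T = 0")
      case True
      then have "\<forall>j\<in>{..<m}. t j = 0" using 1(1) sum_nonneg_eq_0_iff[of "{..<m}" t] by (simp add: T_def)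
      then have "k = (\<lambda>i. 0)" unfolding 1(3) by simp
      then show ?thesis by (simp add: psup_const)
    next
      case False
      then have Tp: "T > 0" using T0 by simp
      have m1: "1 \<le> m" using Tp by (cases m) (auto simp: T_def)
      define t' where "t' j = t j / T" for j
      have s1: "(\<Sum>j<m. t' j) = 1" using Tp by (simp add: t'_def T_def sum_divide_distrib[symmetric])
      have s2: "\<forall>j<m. 0 \<le> t' j" using 1(1) Tp by (simp add: t'_def)
      have "(INF x\<in>X. SUP i. ereal (G x i)) \<le> (SUP i. ereal (\<Sum>j<m. t' j * G (xs j) i))"
        by (rule isc'[OF m1 s2 s1 1(2)])
      with inf0 have ge: "0 \<le> (SUP i. ereal (\<Sum>j<m. t' j * G (xs j) i))" by (rule order_trans)
      have eq: "(\<Sum>j<m. t' j * G (xs j) i) = k i / T" for i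
        unfolding 1(3) t'_def by (simp add: sum_divide_distrib)
      show ?thesis
      proof (rule ccontr)
        assume "\<not> 0 \<le> psup k"
        then have neg: "psup k / T < 0" using Tp by (simp add: divide_neg_pos)
        have "k i / T \<le> psup k / T" for i
          using psup_ub[OF Klin[OF hk]] Tp by (simp add: divide_right_mono)
        then have le: "(SUP i. ereal (\<Sum>j<m. t' j * G (xs j) i)) \<le> ereal (psup k / T)"
          unfolding eq by (intro SUP_least) auto
        have "0 \<le> ereal (psup k / T)" using ge le by (rule order_trans)
        then have "0 \<le> psup k / T" by simp
        with neg show False by linarith
      qed
    qed
  qed
  define q where "q v = (INF k\<in>K. psup (\<lambda>i. v i + k i))" for v
  have qlow: "- psup (\<lambda>i. - v i) \<le> psup (\<lambda>i. v i + k i)" if v: "v \<in> linfty" and k: "k \<in> K" for v k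
  proof -
    have "psup (\<lambda>i. (v i + k i) + - v i) \<le> psup (\<lambda>i. v i + k i) + psup (\<lambda>i. - v i)"
      by (rule sl_add[OF sublin_psup vsp_add[OF vsp_linfty v Klin[OF k]] vsp_neg[OF vsp_linfty v]])
    then have "psup k \<le> psup (\<lambda>i. v i + k i) + psup (\<lambda>i. - v i)" by simp
    with Kpos[OF k] show ?thesis by linarith
  qed
  have q_le: "q v \<le> psup (\<lambda>i. v i + k i)" if "v \<in> linfty" "k \<in> K" for v k
    unfolding q_def using qlow[OF that(1)] that(2)
    by (intro cINF_lower bdd_belowI[where m="- psup (\<lambda>i. - v i)"]) auto
  have q_ge: "m \<le> q v" if "\<And>k. k \<in> K \<Longrightarrow> m \<le> psup (\<lambda>i. v i + k i)" for v m
    unfolding q_def using that K0 by (intro cINF_greatest) auto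
  have q_hom_le: "q (\<lambda>i. c * v i) \<le> c * q v" if c: "c > 0" and v: "v \<in> linfty" for c v
  proof -
    have "q (\<lambda>i. c * v i) / c \<le> q v"
    proof (rule q_ge)
      fix k assume k: "k \<in> K"
      have "q (\<lambda>i. c * v i) \<le> psup (\<lambda>i. c * v i + c * k i)"
        using q_le[OF vsp_scale[OF vsp_linfty v] Kscale[OF k]] c by simp
      also have "psup (\<lambda>i. c * v i + c * k i) = c * psup (\<lambda>i. v i + k i)"
        using sl_hom[OF sublin_psup _ vsp_add[OF vsp_linfty v Klin[OF k]], of c] c
        by (simp add: distrib_left)
      finally show "q (\<lambda>i. c * v i) / c \<le> psup (\<lambda>i. v i + k i)" using c by (simp add: field_simps)
    qed
    then show ?thesis using c by (simp add: field_simps)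
  qed
  have q_sl: "sublin linfty q"
    unfolding sublin_def
  proof (intro conjI ballI allI impI)
    fix u v :: "'l option \<Rightarrow> real" assume u: "u \<in> linfty" and v: "v \<in> linfty"
    have uv: "(\<lambda>i. u i + v i) \<in> linfty" by (rule vsp_add[OF vsp_linfty u v])
    have "q (\<lambda>i. u i + v i) - psup (\<lambda>i. v i + k2 i) \<le> q u" if k2: "k2 \<in> K" for k2
    proof (rule q_ge)
      fix k1 assume k1: "k1 \<in> K"
      have "q (\<lambda>i. u i + v i) \<le> psup (\<lambda>i. (u i + v i) + (k1 i + k2 i))"
        using q_le[OF uv Kadd[OF k1 k2]] by simp
      also have "(\<lambda>i. (u i + v i) + (k1 i + k2 i)) = (\<lambda>i. (u i + k1 i) + (v i + k2 i))"
        by (simp add: algebra_simps)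
      also have "psup \<dots> \<le> psup (\<lambda>i. u i + k1 i) + psup (\<lambda>i. v i + k2 i)"
        by (rule sl_add[OF sublin_psup vsp_add[OF vsp_linfty u Klin[OF k1]] vsp_add[OF vsp_linfty v Klin[OF k2]]])
      finally show "q (\<lambda>i. u i + v i) - psup (\<lambda>i. v i + k2 i) \<le> psup (\<lambda>i. u i + k1 i)" by simp
    qed
    then have "q (\<lambda>i. u i + v i) - q u \<le> q v"
      by (intro q_ge) (simp add: algebra_simps)
    then show "q (\<lambda>i. u i + v i) \<le> q u + q v" by simp
  next
    fix c :: real and v :: "'l option \<Rightarrow> real" assume c: "c \<ge> 0" and v: "v \<in> linfty"
    show "q (\<lambda>i. c * v i) = c * q v"
    proof (cases "c = 0")
      case True
      have "q (\<lambda>i. 0) \<le> 0" using q_le[OF linfty_const[of 0] K0] by (simp add: psup_const)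
      moreover have "0 \<le> q (\<lambda>i. 0)" by (rule q_ge) (use Kpos in simp)
      ultimately show ?thesis using True by (simp add: psup_const)
    next
      case False
      then have cp: "c > 0" using c by simp
      have "q (\<lambda>i. (1/c) * (c * v i)) \<le> (1/c) * q (\<lambda>i. c * v i)"
        by (rule q_hom_le) (use cp vsp_scale[OF vsp_linfty v] in auto)
      then have "q v \<le> (1/c) * q (\<lambda>i. c * v i)" using cp by simp
      then have "c * q v \<le> q (\<lambda>i. c * v i)" using cp by (simp add: field_simps)
      with q_hom_le[OF cp v] show ?thesis by simp
    qed
  qed
  obtain \<psi> where psi: "(\<forall>u\<in>linfty. \<forall>v\<in>linfty. \<psi> (\<lambda>i. u i + v i) = \<psi> u + \<psi> v) \<and>
             (\<forall>c. \<forall>u\<in>linfty. \<psi> (\<lambda>i. c * u i) = c * \<psi> u) \<and> (\<forall>v\<in>linfty. \<psi> v \<le> q v)"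
    using hahn_banach[OF vsp_linfty q_sl] by (elim exE)
  have padd: "\<And>u v. u \<in> linfty \<Longrightarrow> v \<in> linfty \<Longrightarrow> \<psi> (\<lambda>i. u i + v i) = \<psi> u + \<psi> v"
    using psi by simp
  have phom: "\<And>c u. u \<in> linfty \<Longrightarrow> \<psi> (\<lambda>i. c * u i) = c * \<psi> u"
    using psi by simp
  have pq: "\<And>v. v \<in> linfty \<Longrightarrow> \<psi> v \<le> q v"
    using psi by simp
  have ppos: "0 \<le> \<psi> v" if v: "v \<in> linfty" and nn: "\<And>i. 0 \<le> v i" for v
  proof -
    have nv: "(\<lambda>i. (-1) * v i) \<in> linfty" by (rule vsp_scale[OF vsp_linfty v])
    have "\<psi> (\<lambda>i. (-1) * v i) \<le> q (\<lambda>i. (-1) * v i)" by (rule pq[OF nv])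
    also have "\<dots> \<le> psup (\<lambda>i. (-1) * v i + 0)" using q_le[OF nv K0] by simp
    also have "\<dots> \<le> 0" by (rule psup_least) (use nn in \<open>simp\<close>)
    finally show ?thesis using phom[OF v, of "-1"] by simp
  qed
  have pmono: "\<psi> u \<le> \<psi> v" if "u \<in> linfty" "v \<in> linfty" "\<And>i. u i \<le> v i" for u v
    by (rule lin_mono[where \<Phi>=\<psi>]) (use padd phom ppos that in auto)
  have pG: "0 \<le> \<psi> (G x)" if x: "x \<in> X" for x
  proof -
    have nG: "(\<lambda>i. (-1) * G x i) \<in> linfty" by (rule vsp_scale[OF vsp_linfty Glin[OF x]])
    have "\<psi> (\<lambda>i. (-1) * G x i) \<le> q (\<lambda>i. (-1) * G x i)" by (rule pq[OF nG])
    also have "\<dots> \<le> psup (\<lambda>i. (-1) * G x i + G x i)" by (rule q_le[OF nG KG[OF x]])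
    also have "\<dots> = 0" by (simp add: psup_const)
    finally show ?thesis using phom[OF Glin[OF x], of "-1"] by simp
  qed
  have p1: "\<psi> (\<lambda>i. 1) = 1"
  proof -
    have a: "\<psi> (\<lambda>i::'l option. 1) \<le> 1"
      using pq[OF linfty_const[of 1]] q_le[OF linfty_const[of 1] K0] by (simp add: psup_const)
    have b: "\<psi> (\<lambda>i::'l option. -1) \<le> -1"
      using pq[OF linfty_const[of "-1"]] q_le[OF linfty_const[of "-1"] K0] by (simp add: psup_const)
    have "\<psi> (\<lambda>i::'l option. (-1) * 1) = (-1) * \<psi> (\<lambda>i. 1)" by (rule phom[OF linfty_const])
    with a b show ?thesis by simp
  qed
  define lift where "lift u = (\<lambda>i::'l option. case i of None \<Rightarrow> 0 | Some l \<Rightarrow> u l)" for u :: "'l \<Rightarrow> real"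
  define eN where "eN = (\<lambda>i::'l option. case i of None \<Rightarrow> 1 | Some l \<Rightarrow> (0::real))"
  have lift_lin: "lift u \<in> linfty" if hu: "u \<in> linfty" for u
  proof -
    obtain B where B: "\<forall>l. \<bar>u l\<bar> \<le> B" using hu by (auto simp: linfty_iff)
    have "\<bar>lift u i\<bar> \<le> \<bar>B\<bar>" for i using B by (cases i) (auto simp: lift_def intro: order_trans)
    then show ?thesis by (auto simp: linfty_iff)
  qed
  have eN_lin: "eN \<in> linfty"
  proof -
    have "\<bar>eN i\<bar> \<le> 1" for i by (cases i) (auto simp: eN_def)
    then show ?thesis by (auto simp: linfty_iff)
  qed
  have lift_add: "lift (\<lambda>l. u l + v l) = (\<lambda>i. lift u i + lift v i)" for u v
    by (rule ext, simp add: lift_def split: option.split)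
  have lift_scale: "lift (\<lambda>l. c * u l) = (\<lambda>i. c * lift u i)" for c u
    by (rule ext, simp add: lift_def split: option.split)
  have G_dec: "G x = (\<lambda>i. (f x - f x0) * eN i + lift (\<lambda>l. fam l x) i)" for x
    by (rule ext, simp add: G_def eN_def lift_def split: option.split)
  have one_dec: "(\<lambda>i::'l option. 1) = (\<lambda>i. 1 * eN i + lift (\<lambda>l. 1) i)"
    by (rule ext, simp add: eN_def lift_def split: option.split)
  define \<alpha> where "\<alpha> = \<psi> eN"
  define \<phi> where "\<phi> u = \<psi> (lift u)" for u
  have phi_add: "\<phi> (\<lambda>l. u l + v l) = \<phi> u + \<phi> v" if "u \<in> linfty" "v \<in> linfty" for u v
    unfolding \<phi>_def lift_add using padd lift_lin that by simp
  have phi_hom: "\<phi> (\<lambda>l. c * u l) = c * \<phi> u" if "u \<in> linfty" for c u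
    unfolding \<phi>_def lift_scale using phom lift_lin that by simp
  have phi_pos: "0 \<le> \<phi> u" if "u \<in> linfty" "\<forall>l. 0 \<le> u l" for u
    unfolding \<phi>_def using that by (intro ppos lift_lin) (auto simp: lift_def split: option.split)
  have dec: "\<psi> (\<lambda>i. a * eN i + lift w i) = a * \<alpha> + \<phi> w" if "w \<in> linfty" for a w
  proof -
    have "\<psi> (\<lambda>i. a * eN i + lift w i) = \<psi> (\<lambda>i. a * eN i) + \<psi> (lift w)"
      by (rule padd[OF vsp_scale[OF vsp_linfty eN_lin] lift_lin[OF that]])
    then show ?thesis using phom[OF eN_lin, of a] by (simp add: \<alpha>_def \<phi>_def)
  qed
  have al_phi1: "\<alpha> + \<phi> (\<lambda>l. 1) = 1"
    using p1 dec[OF linfty_const, of 1 1] one_dec by simp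
  have psiG: "\<psi> (G x) = (f x - f x0) * \<alpha> + \<phi> (\<lambda>l. fam l x)" if "x \<in> X" for x
    unfolding G_dec by (rule dec[OF bddx[OF that]])
  have al0: "0 \<le> \<alpha>" unfolding \<alpha>_def by (rule ppos[OF eN_lin]) (simp add: eN_def split: option.split)
  have phimono: "\<phi> u \<le> \<phi> v" if "u \<in> linfty" "v \<in> linfty" "\<And>l. u l \<le> v l" for u v
    by (rule lin_mono[where \<Phi>=\<phi>]) (use phi_add phi_hom phi_pos that in auto)
  have alp: "0 < \<alpha>"
  proof (rule ccontr)
    assume "\<not> 0 < \<alpha>"
    then have a0: "\<alpha> = 0" using al0 by simp
    obtain x1 where x1: "x1 \<in> X" and s: "(SUP l. fam l x1) < 0" using slater by blast
    define S where "S = (SUP l. fam l x1)"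
    have "0 \<le> \<phi> (\<lambda>l. fam l x1)" using pG[OF x1] psiG[OF x1] a0 by simp
    also have "\<phi> (\<lambda>l. fam l x1) \<le> \<phi> (\<lambda>l. S * 1)"
      by (rule phimono[OF bddx[OF x1] linfty_const]) (simp add: S_def cSUP_upper[OF _ linfty_bdd[OF bddx[OF x1]]])
    also have "\<dots> = S * \<phi> (\<lambda>l. 1)" by (rule phi_hom[OF linfty_const])
    also have "\<dots> = S" using al_phi1 a0 by simp
    finally show False using s S_def by simp
  qed
  define \<Phi>0 where "\<Phi>0 u = \<phi> u / \<alpha>" for u
  have phi1: "0 \<le> \<phi> (\<lambda>l. 1)" by (rule phi_pos[OF linfty_const]) simp
  have pcl: "pos_cont_lin_functional \<Phi>0"
    unfolding pos_cont_lin_functional_def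
  proof (intro conjI ballI allI impI)
    fix u v :: "'l \<Rightarrow> real" assume "u \<in> linfty" "v \<in> linfty"
    then show "\<Phi>0 (\<lambda>l. u l + v l) = \<Phi>0 u + \<Phi>0 v" by (simp add: \<Phi>0_def phi_add add_divide_distrib)
  next
    fix c :: real and u :: "'l \<Rightarrow> real" assume "u \<in> linfty"
    then show "\<Phi>0 (\<lambda>l. c * u l) = c * \<Phi>0 u" by (simp add: \<Phi>0_def phi_hom)
  next
    fix u :: "'l \<Rightarrow> real" assume "u \<in> linfty" "\<forall>l. 0 \<le> u l"
    then show "0 \<le> \<Phi>0 u" using phi_pos alp by (simp add: \<Phi>0_def)
  next
    show "\<exists>C. \<forall>u\<in>linfty. \<bar>\<Phi>0 u\<bar> \<le> C * supnorm u"
    proof (intro exI ballI)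
      fix u :: "'l \<Rightarrow> real" assume u: "u \<in> linfty"
      define S where "S = supnorm u"
      have ul: "\<bar>u l\<bar> \<le> S" for l
        unfolding S_def supnorm_def by (rule cSUP_upper[OF _ linfty_bdd_abs[OF u]]) simp
      have "\<phi> u \<le> \<phi> (\<lambda>l. S * 1)"
        by (rule phimono[OF u linfty_const]) (use ul in \<open>simp add: abs_le_iff\<close>)
      also have "\<dots> = S * \<phi> (\<lambda>l. 1)" by (rule phi_hom[OF linfty_const])
      finally have up: "\<phi> u \<le> S * \<phi> (\<lambda>l. 1)" .
      have "\<phi> (\<lambda>l. (-S) * 1) \<le> \<phi> u"
      proof (rule phimono[OF linfty_const u])
        fix l show "(-S) * 1 \<le> u l" using ul[of l] by linarith
      qed
      moreover have "\<phi> (\<lambda>l. (-S) * 1) = (-S) * \<phi> (\<lambda>l. 1)" by (rule phi_hom[OF linfty_const])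
      ultimately have lo: "- (S * \<phi> (\<lambda>l. 1)) \<le> \<phi> u" by simp
      have "\<bar>\<phi> u\<bar> \<le> S * \<phi> (\<lambda>l. 1)" using up lo by simp
      then have "\<bar>\<phi> u\<bar> / \<alpha> \<le> S * \<phi> (\<lambda>l. 1) / \<alpha>" using alp by (simp add: divide_right_mono)
      then show "\<bar>\<Phi>0 u\<bar> \<le> (\<phi> (\<lambda>l. 1) / \<alpha>) * supnorm u"
        using alp by (simp add: \<Phi>0_def S_def abs_divide mult.commute)
    qed
  qed
  have ineq: "0 \<le> f x - f x0 + \<Phi>0 (\<lambda>l. fam l x)" if x: "x \<in> X" for x
  proof -
    have "0 \<le> (f x - f x0) * \<alpha> + \<phi> (\<lambda>l. fam l x)" using pG[OF x] psiG[OF x] by simp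
    then have "0 \<le> ((f x - f x0) * \<alpha> + \<phi> (\<lambda>l. fam l x)) / \<alpha>" using alp by simp
    then show ?thesis using alp by (simp add: \<Phi>0_def add_divide_distrib)
  qed
  have z: "\<Phi>0 (\<lambda>l. fam l x0) = 0"
  proof -
    have "\<phi> (\<lambda>l. fam l x0) \<le> \<phi> (\<lambda>l. 0 * 1)"
    proof (rule phimono[OF bddx[OF x0_in] linfty_const])
      fix l
      have "fam l x0 \<le> (SUP l. fam l x0)" by (rule cSUP_upper[OF _ linfty_bdd[OF bddx[OF x0_in]]]) simp
      then show "fam l x0 \<le> 0 * 1" using x0f by simp
    qed
    also have "\<dots> = 0 * \<phi> (\<lambda>l. 1)" by (rule phi_hom[OF linfty_const])
    finally have "\<Phi>0 (\<lambda>l. fam l x0) \<le> 0" using alp by (simp add: \<Phi>0_def divide_nonpos_pos)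
    moreover have "0 \<le> \<Phi>0 (\<lambda>l. fam l x0)" using ineq[OF x0_in] by simp
    ultimately show ?thesis by simp
  qed
  show ?thesis using pcl ineq z by blast
qed

theorem theorem4p4:
  fixes X :: "'a set" and fam :: "'l \<Rightarrow> 'a \<Rightarrow> real" and f :: "'a \<Rightarrow> real" and x0 :: 'a
  assumes X_ne: "X \<noteq> {}"
    and x0_in: "x0 \<in> X"
    and feas_ne: "{x\<in>X. (SUP l. fam l x) \<le> 0} \<noteq> {}"
    and bdd: "\<forall>x\<in>X. (\<lambda>l. fam l x) \<in> linfty"
    and isc: "infsup_convex
                (\<lambda>i x. case i of None \<Rightarrow> f x - f x0 | Some l \<Rightarrow> fam l x) X"
    and slater: "\<exists>x1\<in>X. (SUP l. fam l x1) < 0"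
  shows "(x0 \<in> {x\<in>X. (SUP l. fam l x) \<le> 0} \<and>
          ereal (f x0) = (INF x\<in>{x\<in>X. (SUP l. fam l x) \<le> 0}. ereal (f x)))
     \<longleftrightarrow>
         (x0 \<in> {x\<in>X. (SUP l. fam l x) \<le> 0} \<and>
          (\<exists>\<Phi>0. pos_cont_lin_functional \<Phi>0 \<and>
             ereal (f x0 + \<Phi>0 (\<lambda>l. fam l x0)) = (INF x\<in>X. ereal (f x + \<Phi>0 (\<lambda>l. fam l x))) \<and>
             \<Phi>0 (\<lambda>l. fam l x0) = 0))"
proof
  assume L: "x0 \<in> {x\<in>X. (SUP l. fam l x) \<le> 0} \<and>
          ereal (f x0) = (INF x\<in>{x\<in>X. (SUP l. fam l x) \<le> 0}. ereal (f x))"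
  have opt: "f x0 \<le> f x" if "x \<in> X" "(SUP l. fam l x) \<le> 0" for x
  proof -
    have "ereal (f x0) \<le> ereal (f x)" using L that by (metis (no_types, lifting) INF_lower mem_Collect_eq)
    then show ?thesis by simp
  qed
  have x0f: "(SUP l. fam l x0) \<le> 0" using L by simp
  obtain \<Phi>0 where pcl: "pos_cont_lin_functional \<Phi>0" and ineq: "\<forall>x\<in>X. 0 \<le> f x - f x0 + \<Phi>0 (\<lambda>l. fam l x)"
    and z: "\<Phi>0 (\<lambda>l. fam l x0) = 0"
    using forward[OF x0_in x0f bdd isc slater opt] by blast
  have "ereal (f x0 + \<Phi>0 (\<lambda>l. fam l x0)) = (INF x\<in>X. ereal (f x + \<Phi>0 (\<lambda>l. fam l x)))"
  proof (rule antisym)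
    show "ereal (f x0 + \<Phi>0 (\<lambda>l. fam l x0)) \<le> (INF x\<in>X. ereal (f x + \<Phi>0 (\<lambda>l. fam l x)))"
    proof (rule INF_greatest)
      fix x assume "x \<in> X"
      then show "ereal (f x0 + \<Phi>0 (\<lambda>l. fam l x0)) \<le> ereal (f x + \<Phi>0 (\<lambda>l. fam l x))"
        using ineq z by force
    qed
    show "(INF x\<in>X. ereal (f x + \<Phi>0 (\<lambda>l. fam l x))) \<le> ereal (f x0 + \<Phi>0 (\<lambda>l. fam l x0))"
      by (rule INF_lower[OF x0_in])
  qed
  then show "x0 \<in> {x\<in>X. (SUP l. fam l x) \<le> 0} \<and>
          (\<exists>\<Phi>0. pos_cont_lin_functional \<Phi>0 \<and>
             ereal (f x0 + \<Phi>0 (\<lambda>l. fam l x0)) = (INF x\<in>X. ereal (f x + \<Phi>0 (\<lambda>l. fam l x))) \<and>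
             \<Phi>0 (\<lambda>l. fam l x0) = 0)"
    using L pcl z by blast
next
  assume R: "x0 \<in> {x\<in>X. (SUP l. fam l x) \<le> 0} \<and>
          (\<exists>\<Phi>0. pos_cont_lin_functional \<Phi>0 \<and>
             ereal (f x0 + \<Phi>0 (\<lambda>l. fam l x0)) = (INF x\<in>X. ereal (f x + \<Phi>0 (\<lambda>l. fam l x))) \<and>
             \<Phi>0 (\<lambda>l. fam l x0) = 0)"
  then have x0F: "x0 \<in> {x\<in>X. (SUP l. fam l x) \<le> 0}" by blast
  from R obtain \<Phi>0 where pcl: "pos_cont_lin_functional \<Phi>0"
    and eq: "ereal (f x0 + \<Phi>0 (\<lambda>l. fam l x0)) = (INF x\<in>X. ereal (f x + \<Phi>0 (\<lambda>l. fam l x)))"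
    and z: "\<Phi>0 (\<lambda>l. fam l x0) = 0" by blast
  have add: "\<forall>u\<in>linfty. \<forall>v\<in>linfty. \<Phi>0 (\<lambda>l. u l + v l) = \<Phi>0 u + \<Phi>0 v"
    and hom: "\<forall>c::real. \<forall>u\<in>linfty. \<Phi>0 (\<lambda>l. c * u l) = c * \<Phi>0 u"
    and pos: "\<forall>u\<in>linfty. (\<forall>l. 0 \<le> u l) \<longrightarrow> 0 \<le> \<Phi>0 u"
    using pcl unfolding pos_cont_lin_functional_def by blast+
  have Z0: "\<Phi>0 (\<lambda>l. 0) = 0"
    using hom[rule_format, OF linfty_const, of 0 0] by simp
  have le: "ereal (f x0) \<le> ereal (f x)" if x: "x \<in> {x\<in>X. (SUP l. fam l x) \<le> 0}" for x
  proof -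
    have xX: "x \<in> X" and sx: "(SUP l. fam l x) \<le> 0" using x by auto
    have fx: "(\<lambda>l. fam l x) \<in> linfty" using bdd xX by blast
    have "\<Phi>0 (\<lambda>l. fam l x) \<le> \<Phi>0 (\<lambda>l. 0)"
    proof (rule lin_mono[OF add hom pos fx linfty_const])
      fix l
      have "fam l x \<le> (SUP l. fam l x)" by (rule cSUP_upper[OF _ linfty_bdd[OF fx]]) simp
      then show "fam l x \<le> 0" using sx by simp
    qed
    then have a: "\<Phi>0 (\<lambda>l. fam l x) \<le> 0" using Z0 by simp
    have "ereal (f x0 + \<Phi>0 (\<lambda>l. fam l x0)) \<le> ereal (f x + \<Phi>0 (\<lambda>l. fam l x))"
      unfolding eq by (rule INF_lower[OF xX])
    then show ?thesis using a z by simp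
  qed
  have "ereal (f x0) = (INF x\<in>{x\<in>X. (SUP l. fam l x) \<le> 0}. ereal (f x))"
  proof (rule antisym)
    show "ereal (f x0) \<le> (INF x\<in>{x\<in>X. (SUP l. fam l x) \<le> 0}. ereal (f x))"
      by (rule INF_greatest) (rule le)
    show "(INF x\<in>{x\<in>X. (SUP l. fam l x) \<le> 0}. ereal (f x)) \<le> ereal (f x0)"
      by (rule INF_lower[OF x0F])
  qed
  then show "x0 \<in> {x\<in>X. (SUP l. fam l x) \<le> 0} \<and>
          ereal (f x0) = (INF x\<in>{x\<in>X. (SUP l. fam l x) \<le> 0}. ereal (f x))"
    using x0F by blast
qed

end
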